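(* For a set $\mathcal{R}$ of languages over $\Sigma$ and a regular language $R\subseteq\Sigma^*$ let $\mathcal{R}\,\dot\cup\,R=\{L\cup R\mid L\in\mathcal{R}\}$. (1) There exist a rational set of regular languages $\mathcal{R}$ and a regular language $R$ such that $\mathcal{R}\,\dot\cup\,R$ is not a rational set of regular languages. (2) If $\mathcal{R}$ is a finite rational set of regular languages and $R$ is regular, then $\mathcal{R}\,\dot\cup\,R$ is a rational set of regular languages. (3) In the latter case a different language substitution is in general required: there exist an alphabet $\Delta$, a regular language substitution $\varphi:\Delta\to2^{\Sigma^*}$, a regular $K\subseteq\Delta^+$ with $\mathcal{R}=(K,\varphi)$ finite, and a regular $R\subseteq\Sigma^*$ such that there is no regular $K'\subseteq\Delta^+$ with $\mathcal{R}\,\dot\cup\,R=(K',\varphi)$.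
   Context: Alphabets are nonempty finite sets. A regular language substitution $\varphi:\Delta\to2^{\Sigma^*}$ maps each symbol to a regular language over $\Sigma$, extended by $\varphi(\delta w)=\varphi(\delta)\varphi(w)$. A set $\mathcal{R}$ of regular languages over $\Sigma$ is a rational set of regular languages, written $\mathcal{R}=(K,\varphi)$, if there are an alphabet $\Delta$, a regular $K\subseteq\Delta^+$ and a regular language substitution $\varphi$ with $\mathcal{R}=\{\varphi(w)\mid w\in K\}$. *)

theory Defs
  imports Main
begin

definition alphabet :: "'a set \<Rightarrow> bool" where
  "alphabet \<Sigma> \<longleftrightarrow> finite \<Sigma> \<and> \<Sigma> \<noteq> {}"

definition lconc :: "'a list set \<Rightarrow> 'a list set \<Rightarrow> 'a list set" where
  "lconc A B = {u @ v | u v. u \<in> A \<and> v \<in> B}"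

definition lstar :: "'a list set \<Rightarrow> 'a list set" where
  "lstar A = {concat ws | ws. set ws \<subseteq> A}"

inductive regular :: "'a set \<Rightarrow> 'a list set \<Rightarrow> bool" for \<Sigma> :: "'a set" where
  reg_empty: "regular \<Sigma> {}"
| reg_eps: "regular \<Sigma> {[]}"
| reg_sym: "a \<in> \<Sigma> \<Longrightarrow> regular \<Sigma> {[a]}"
| reg_union: "regular \<Sigma> A \<Longrightarrow> regular \<Sigma> B \<Longrightarrow> regular \<Sigma> (A \<union> B)"
| reg_conc: "regular \<Sigma> A \<Longrightarrow> regular \<Sigma> B \<Longrightarrow> regular \<Sigma> (lconc A B)"
| reg_star: "regular \<Sigma> A \<Longrightarrow> regular \<Sigma> (lstar A)"

definition reg_subst :: "'d set \<Rightarrow> 'a set \<Rightarrow> ('d \<Rightarrow> 'a list set) \<Rightarrow> bool" where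
  "reg_subst \<Delta> \<Sigma> \<phi> \<longleftrightarrow> (\<forall>\<delta>\<in>\<Delta>. regular \<Sigma> (\<phi> \<delta>))"

fun subst_word :: "('d \<Rightarrow> 'a list set) \<Rightarrow> 'd list \<Rightarrow> 'a list set" where
  "subst_word \<phi> [] = {[]}"
| "subst_word \<phi> (\<delta> # w) = lconc (\<phi> \<delta>) (subst_word \<phi> w)"

definition represents ::
  "'a set \<Rightarrow> 'd set \<Rightarrow> 'd list set \<Rightarrow> ('d \<Rightarrow> 'a list set) \<Rightarrow> 'a list set set \<Rightarrow> bool" where
  "represents \<Sigma> \<Delta> K \<phi> \<R> \<longleftrightarrow>
     alphabet \<Delta> \<and> regular \<Delta> K \<and> K \<subseteq> lists \<Delta> - {[]} \<and> reg_subst \<Delta> \<Sigma> \<phi> \<and>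
     \<R> = subst_word \<phi> ` K"

text \<open>Rational set of regular languages; symbol alphabets Delta are finite sets of naturals
  (any finite alphabet can be renamed into nat).\<close>
definition rational_set :: "'a set \<Rightarrow> 'a list set set \<Rightarrow> bool" where
  "rational_set \<Sigma> \<R> \<longleftrightarrow> (\<exists>(\<Delta>::nat set) K \<phi>. represents \<Sigma> \<Delta> K \<phi> \<R>)"

definition dunion :: "'a list set set \<Rightarrow> 'a list set \<Rightarrow> 'a list set set" where
  "dunion \<R> R = (\<lambda>L. L \<union> R) ` \<R>"

end

theory Submission
  imports Defs
begin

lemma lconc_eps: "lconc A {[]} = A"
  unfolding lconc_def by auto

lemma subst_word_regular:
  assumes "reg_subst \<Delta> \<Sigma> \<phi>" "w \<in> lists \<Delta>"
  shows "regular \<Sigma> (subst_word \<phi> w)"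
  using assms(2)
proof (induction w)
  case Nil then show ?case by (simp add: reg_eps)
  case (Cons d w)
  then show ?case using assms(1) by (auto simp: reg_subst_def intro: reg_conc)
qed

lemma two_elem:
  assumes "subst_word \<phi> w = {[], x}" "x \<noteq> []"
  shows "\<exists>d\<in>set w. \<phi> d = {[], x}"
  using assms(1)
proof (induction w)
  case Nil then show ?case using assms(2) by auto
next
  case (Cons d w)
  define S where "S = subst_word \<phi> w"
  have P: "lconc (\<phi> d) S = {[], x}" using Cons.prems S_def by simp
  have "[] \<in> lconc (\<phi> d) S" using P by auto
  then have e1: "[] \<in> \<phi> d" and e2: "[] \<in> S" unfolding lconc_def by auto
  have s1: "\<phi> d \<subseteq> {[], x}"
  proof
    fix u assume "u \<in> \<phi> d"
    then have "u @ [] \<in> lconc (\<phi> d) S" using e2 unfolding lconc_def by blast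
    then show "u \<in> {[], x}" using P by simp
  qed
  have s2: "S \<subseteq> {[], x}"
  proof
    fix u assume "u \<in> S"
    then have "[] @ u \<in> lconc (\<phi> d) S" using e1 unfolding lconc_def by blast
    then show "u \<in> {[], x}" using P by simp
  qed
  show ?case
  proof (cases "\<phi> d = {[], x}")
    case True then show ?thesis by simp
  next
    case False
    with s1 e1 have "\<phi> d = {[]}" by auto
    then have "lconc (\<phi> d) S = S" unfolding lconc_def by auto
    with P have "subst_word \<phi> w = {[], x}" using S_def by simp
    then show ?thesis using Cons.IH by auto
  qed
qed

lemma lstar_zero: "lstar {[0::nat]} = range (\<lambda>n. replicate n 0)"
proof -
  have "concat ws = replicate (length ws) 0" if "set ws \<subseteq> {[0::nat]}" for ws
    using that by (induction ws) auto
  moreover have "replicate n (0::nat) = concat (replicate n [0])" for n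
    by (induction n) auto
  ultimately show ?thesis unfolding lstar_def
  proof (intro set_eqI iffI)
    fix x assume "x \<in> {concat ws |ws. set ws \<subseteq> {[0::nat]}}"
    then obtain ws where "x = concat ws" "set ws \<subseteq> {[0::nat]}" by blast
    then show "x \<in> range (\<lambda>n. replicate n 0)"
      using \<open>\<And>ws. set ws \<subseteq> {[0::nat]} \<Longrightarrow> concat ws = replicate (length ws) 0\<close> by blast
  next
    fix x assume "x \<in> range (\<lambda>n. replicate n (0::nat))"
    then obtain n where "x = replicate n 0" by blast
    moreover have "set (replicate n [0::nat]) \<subseteq> {[0]}" by auto
    ultimately show "x \<in> {concat ws |ws. set ws \<subseteq> {[0::nat]}}"
      using \<open>\<And>n. replicate n (0::nat) = concat (replicate n [0])\<close> by blast
  qed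
qed

lemma subst_const: "subst_word (\<lambda>_. {[0::nat]}) w = {replicate (length w) 0}"
  by (induction w) (auto simp: lconc_def)

lemma part1:
  "\<exists>(\<Sigma>::nat set) \<R> R. alphabet \<Sigma> \<and> rational_set \<Sigma> \<R> \<and> regular \<Sigma> R \<and>
            \<not> rational_set \<Sigma> (dunion \<R> R)"
proof -
  define \<phi> :: "nat \<Rightarrow> nat list set" where "\<phi> = (\<lambda>_. {[0]})"
  define K :: "nat list set" where "K = lconc {[0]} (lstar {[0]})"
  have Kc: "K = range (\<lambda>n. replicate (Suc n) 0)"
    unfolding K_def lstar_zero lconc_def by auto
  have rep: "represents {0} {0} K \<phi> (subst_word \<phi> ` K)"
    unfolding represents_def
  proof (intro conjI)
    show "alphabet {0::nat}" by (simp add: alphabet_def)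
    show "regular {0} K" unfolding K_def by (intro reg_conc reg_star reg_sym) auto
    show "K \<subseteq> lists {0} - {[]}" unfolding Kc by auto
    show "reg_subst {0} {0::nat} \<phi>" unfolding reg_subst_def \<phi>_def by (auto intro: reg_sym)
  qed simp
  define D where "D = dunion (subst_word \<phi> ` K) {[]}"
  have Dc: "D = range (\<lambda>n. {[], replicate (Suc n) (0::nat)})"
    unfolding D_def dunion_def Kc \<phi>_def image_image
    by (simp add: subst_const insert_commute)
  have inj: "inj (\<lambda>n. {[], replicate (Suc n) (0::nat)})"
  proof (rule injI)
    fix m n assume "{[], replicate (Suc m) (0::nat)} = {[], replicate (Suc n) 0}"
    then have "replicate (Suc m) (0::nat) \<in> {[], replicate (Suc n) 0}" by blast
    then have "replicate (Suc m) (0::nat) = replicate (Suc n) 0" by auto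
    then show "m = n" by (metis length_replicate nat.inject)
  qed
  have infD: "infinite D" unfolding Dc using inj finite_imageD by blast
  have "\<not> rational_set {0} D"
  proof
    assume "rational_set {0} D"
    then obtain \<Delta> :: "nat set" and K' \<psi> where r: "represents {0} \<Delta> K' \<psi> D"
      unfolding rational_set_def by blast
    have "D \<subseteq> \<psi> ` \<Delta>"
    proof
      fix X assume "X \<in> D"
      then obtain n where X: "X = {[], replicate (Suc n) (0::nat)}" unfolding Dc by auto
      from r \<open>X \<in> D\<close> obtain w where w: "w \<in> K'" "X = subst_word \<psi> w"
        unfolding represents_def by auto
      have "w \<in> lists \<Delta>" using r w(1) unfolding represents_def by auto
      moreover obtain d where "d \<in> set w" "\<psi> d = X"
        using two_elem[of \<psi> w "replicate (Suc n) 0"] w(2) X by auto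
      ultimately show "X \<in> \<psi> ` \<Delta>" by auto
    qed
    moreover have "finite \<Delta>" using r unfolding represents_def alphabet_def by auto
    ultimately show False using infD finite_subset by blast
  qed
  moreover have "rational_set {0} (subst_word \<phi> ` K)"
    unfolding rational_set_def using rep by blast
  ultimately show ?thesis unfolding D_def
    by (intro exI[of _ "{0::nat}"] exI[of _ "subst_word \<phi> ` K"] exI[of _ "{[]}"])
       (auto simp: alphabet_def reg_eps)
qed

lemma reg_singletons: "regular {0..(n::nat)} ((\<lambda>i. [i]) ` {0..<m})" if "m \<le> n"
  using that
proof (induction m)
  case 0 then show ?case by (simp add: reg_empty)
next
  case (Suc m)
  have eq: "(\<lambda>i. [i]) ` {0..<Suc m} = {[m]} \<union> (\<lambda>i. [i]) ` {0..<m}" by auto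
  have A: "regular {0..n} {[m]}" using Suc.prems by (intro reg_sym) simp
  have B: "regular {0..n} ((\<lambda>i. [i]) ` {0..<m})" using Suc by simp
  show ?case unfolding eq by (rule reg_union[OF A B])
qed

lemma part2:
  assumes "alphabet \<Sigma>" "rational_set \<Sigma> \<R>" "finite \<R>" "regular \<Sigma> R"
  shows "rational_set \<Sigma> (dunion \<R> R)"
proof -
  obtain \<Delta>0 :: "nat set" and K0 \<phi>0 where r0: "represents \<Sigma> \<Delta>0 K0 \<phi>0 \<R>"
    using assms(2) unfolding rational_set_def by blast
  have regR: "regular \<Sigma> L" if "L \<in> \<R>" for L
    using r0 that subst_word_regular unfolding represents_def by blast
  define n where "n = card \<R>"
  obtain f where f: "bij_betw f {0..<n} \<R>" using ex_bij_betw_nat_finite[OF assms(3)] n_def by blast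
  define \<phi> where "\<phi> = (\<lambda>i. if i < n then f i \<union> R else {})"
  define K where "K = (\<lambda>i. [i]) ` {0..<n}"
  have "represents \<Sigma> {0..n} K \<phi> (dunion \<R> R)"
    unfolding represents_def
  proof (intro conjI)
    show "alphabet {0..n}" by (simp add: alphabet_def)
    show "regular {0..n} K" unfolding K_def by (rule reg_singletons) simp
    show "K \<subseteq> lists {0..n} - {[]}" unfolding K_def by auto
    show "reg_subst {0..n} \<Sigma> \<phi>" unfolding reg_subst_def \<phi>_def
    proof
      fix i assume "i \<in> {0..n}"
      show "regular \<Sigma> (if i < n then f i \<union> R else {})"
      proof (cases "i < n")
        case True
        then have "f i \<in> \<R>" using f bij_betw_apply by fastforce
        then show ?thesis using True regR assms(4) by (auto intro: reg_union)
      qed (simp add: reg_empty)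
    qed
    have "subst_word \<phi> ` K = (\<lambda>i. f i \<union> R) ` {0..<n}"
      unfolding K_def \<phi>_def image_image by (simp add: lconc_eps)
    also have "\<dots> = (\<lambda>L. L \<union> R) ` (f ` {0..<n})" by auto
    also have "\<dots> = dunion \<R> R" unfolding dunion_def using bij_betw_imp_surj_on[OF f] by (rule arg_cong)
    finally show "dunion \<R> R = subst_word \<phi> ` K" by simp
  qed
  then show ?thesis unfolding rational_set_def by blast
qed

lemma part3:
  "\<exists>(\<Sigma>::nat set) (\<Delta>::nat set) \<phi> K R. alphabet \<Sigma> \<and> represents \<Sigma> \<Delta> K \<phi> (subst_word \<phi> ` K) \<and>
            finite (subst_word \<phi> ` K) \<and> regular \<Sigma> R \<and>
            \<not> (\<exists>K'. represents \<Sigma> \<Delta> K' \<phi> (dunion (subst_word \<phi> ` K) R))"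
proof -
  define \<phi> :: "nat \<Rightarrow> nat list set" where "\<phi> = (\<lambda>_. {[0]})"
  define K :: "nat list set" where "K = {[0]}"
  have rep: "represents {0} {0} K \<phi> (subst_word \<phi> ` K)"
    unfolding represents_def K_def \<phi>_def
    by (auto simp: alphabet_def reg_subst_def intro: reg_sym)
  have D: "dunion (subst_word \<phi> ` K) {[]} = {{[], [0]}}"
    unfolding dunion_def K_def \<phi>_def by (auto simp: lconc_def)
  have "\<not> (\<exists>K'. represents {0} {0} K' \<phi> (dunion (subst_word \<phi> ` K) {[]}))"
  proof
    assume "\<exists>K'. represents {0} {0} K' \<phi> (dunion (subst_word \<phi> ` K) {[]})"
    then obtain K' where "{{[], [0::nat]}} = subst_word \<phi> ` K'"
      unfolding represents_def D by blast
    then obtain w where "{[], [0::nat]} = subst_word \<phi> w" by (metis imageE insertI1)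
    then have "{[], [0::nat]} = {replicate (length w) 0}" unfolding \<phi>_def subst_const .
    then have "[] \<in> {replicate (length w) (0::nat)}" "[0::nat] \<in> {replicate (length w) (0::nat)}" by blast+
    then show False by simp
  qed
  then show ?thesis
    by (intro exI[of _ "{0::nat}"] exI[of _ "{0::nat}"] exI[of _ \<phi>] exI[of _ K] exI[of _ "{[]}"])
       (use rep in \<open>auto simp: alphabet_def reg_eps K_def\<close>)
qed

theorem proposition6:
  shows "(\<exists>(\<Sigma>::nat set) \<R> R. alphabet \<Sigma> \<and> rational_set \<Sigma> \<R> \<and> regular \<Sigma> R \<and>
            \<not> rational_set \<Sigma> (dunion \<R> R))
       \<and> (\<forall>(\<Sigma>::'a set) \<R> R. alphabet \<Sigma> \<and> rational_set \<Sigma> \<R> \<and> finite \<R> \<and> regular \<Sigma> R \<longrightarrow>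
            rational_set \<Sigma> (dunion \<R> R))
       \<and> (\<exists>(\<Sigma>::nat set) (\<Delta>::nat set) \<phi> K R. alphabet \<Sigma> \<and> represents \<Sigma> \<Delta> K \<phi> (subst_word \<phi> ` K) \<and>
            finite (subst_word \<phi> ` K) \<and> regular \<Sigma> R \<and>
            \<not> (\<exists>K'. represents \<Sigma> \<Delta> K' \<phi> (dunion (subst_word \<phi> ` K) R)))"
  using part1 part2 part3 by blast

end
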